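(* Suppose $g\in\mathcal R_n^f(\{y\},Z,k)$ for some $y\in Y$ and $k\ge1$, and suppose either (a) $X$ and $Y$ are metric spaces and $Z\subset M$ is closed, or (b) $Z=M$ and $X,Y$ are paracompact. Then there exist a neighborhood $V_y$ of $y$ in $Y$ and $\delta_y>0$ such that $g'\in\mathcal R_n^f(\{y'\},Z,k)$ whenever $y'\in V_y$ and $g'\in C(X,M)$ satisfies $\rho(g'(x),g(x))<\delta_y$ for all $x\in f^{-1}(y')$.
   Context: Let $(M,\rho)$ be a complete metric space, $Z\subset M$ closed, $n\ge0$, and $f\colon X\to Y$ a perfect surjection with $\dim f\le n$. For $H\subset Y$ and $k\ge1$, $\mathcal R_n^f(H,Z,k)$ is the set of $g\in C(X,M)$ such that for each $y\in H$ the set $g(f^{-1}(y))\cap Z$ can be covered by a family of open subsets of $M$ of mesh $\le1/k$ and order $\le n$ (every point of $M$ lies in at most $n+1$ members of the family). *)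

theory Defs
  imports "HOL-Analysis.Analysis"
begin

definition fibre :: "'a topology \<Rightarrow> ('a \<Rightarrow> 'b) \<Rightarrow> 'b \<Rightarrow> 'a set" where
  "fibre X f y = {x \<in> topspace X. f x = y}"

definition order_le :: "'m set set \<Rightarrow> nat \<Rightarrow> bool" where
  "order_le \<U> n \<longleftrightarrow> (\<forall>p. finite {U \<in> \<U>. p \<in> U} \<and> card {U \<in> \<U>. p \<in> U} \<le> n + 1)"

definition covering_dim_le :: "'a topology \<Rightarrow> nat \<Rightarrow> bool" where
  "covering_dim_le T n \<longleftrightarrow>
     (\<forall>\<C>. finite \<C> \<and> (\<forall>C\<in>\<C>. openin T C) \<and> \<Union>\<C> = topspace T \<longrightarrow>
        (\<exists>\<V>. finite \<V> \<and> (\<forall>V\<in>\<V>. openin T V) \<and> \<Union>\<V> = topspace T \<and>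
             (\<forall>V\<in>\<V>. \<exists>C\<in>\<C>. V \<subseteq> C) \<and> order_le \<V> n))"

definition map_dim_le :: "'a topology \<Rightarrow> 'b topology \<Rightarrow> ('a \<Rightarrow> 'b) \<Rightarrow> nat \<Rightarrow> bool" where
  "map_dim_le X Y f n \<longleftrightarrow> (\<forall>y\<in>topspace Y. covering_dim_le (subtopology X (fibre X f y)) n)"

definition paracompact_space :: "'a topology \<Rightarrow> bool" where
  "paracompact_space X \<longleftrightarrow> Hausdorff_space X \<and>
     (\<forall>\<C>. (\<forall>C\<in>\<C>. openin X C) \<and> \<Union>\<C> = topspace X \<longrightarrow>
        (\<exists>\<V>. (\<forall>V\<in>\<V>. openin X V) \<and> \<Union>\<V> = topspace X \<and>
             (\<forall>V\<in>\<V>. \<exists>C\<in>\<C>. V \<subseteq> C) \<and> locally_finite_in X \<V>))"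

definition R_set :: "'a topology \<Rightarrow> ('a \<Rightarrow> 'b) \<Rightarrow> nat \<Rightarrow> 'b set \<Rightarrow> 'm::metric_space set \<Rightarrow> nat
                     \<Rightarrow> ('a \<Rightarrow> 'm) set" where
  "R_set X f n H Z k = {g. continuous_map X euclidean g \<and>
     (\<forall>y\<in>H. \<exists>\<U>. (\<forall>U\<in>\<U>. open U) \<and> g ` (fibre X f y) \<inter> Z \<subseteq> \<Union>\<U> \<and>
        (\<forall>U\<in>\<U>. \<forall>a\<in>U. \<forall>b\<in>U. dist a b \<le> 1 / real k) \<and> order_le \<U> n)}"

end

theory Submission
  imports Defs
begin

theorem lemma2p2:
  fixes X :: "'a topology" and Y :: "'b topology" and f :: "'a \<Rightarrow> 'b"
    and Z :: "'m::complete_space set" and g :: "'a \<Rightarrow> 'm" and n k :: nat and y :: 'b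
  assumes "closed Z"
    and "perfect_map X Y f"
    and "map_dim_le X Y f n"
    and "y \<in> topspace Y" and "k \<ge> 1"
    and "g \<in> R_set X f n {y} Z k"
    and "(metrizable_space X \<and> metrizable_space Y) \<or>
         (Z = UNIV \<and> paracompact_space X \<and> paracompact_space Y)"
  shows "\<exists>V \<delta>. openin Y V \<and> y \<in> V \<and> \<delta> > 0 \<and>
           (\<forall>y'\<in>V. \<forall>g'. continuous_map X euclidean g' \<and>
               (\<forall>x\<in>fibre X f y'. dist (g' x) (g x) < \<delta>)
               \<longrightarrow> g' \<in> R_set X f n {y'} Z k)"
proof -
  have gc: "continuous_map X euclidean g" using assms(6) by (simp add: R_set_def)
  obtain \<U> where Uo: "\<forall>U\<in>\<U>. open U" and Ucov: "g ` (fibre X f y) \<inter> Z \<subseteq> \<Union>\<U>"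
    and Um: "\<forall>U\<in>\<U>. \<forall>a\<in>U. \<forall>b\<in>U. dist a b \<le> 1 / real k" and Uord: "order_le \<U> n"
    using assms(6) by (auto simp: R_set_def)
  have pm: "proper_map X Y f" using assms(2) by (simp add: perfect_map_def)
  have cm: "closed_map X Y f" using pm by (simp add: proper_map_def)
  have "compactin X (fibre X f y)" using pm assms(4) by (simp add: proper_map_def fibre_def)
  then have cL: "compact (g ` fibre X f y)" using image_compactin[OF _ gc] by auto
  define L where "L = g ` fibre X f y"
  define W where "W = \<Union>\<U>"
  have "L \<subseteq> \<Union>{W, - Z}" using Ucov by (auto simp: L_def W_def)
  moreover have "\<And>G. G \<in> {W, - Z} \<Longrightarrow> open G" using Uo assms(1) by (auto simp: W_def)
  ultimately obtain e where e0: "0 < e" and eL: "\<And>q. q \<in> L \<Longrightarrow> \<exists>G\<in>{W, - Z}. ball q e \<subseteq> G"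
    using Heine_Borel_lemma[of L "{W, - Z}"] cL L_def by blast
  have key: "p \<in> W" if "q \<in> L" "p \<in> Z" "dist q p < e" for p q
    using eL[OF that(1)] that by auto
  define U where "U = {x \<in> topspace X. g x \<in> (\<Union>q\<in>L. ball q (e/2))}"
  have Uop: "openin X U" unfolding U_def
    by (rule openin_continuous_map_preimage[OF gc]) auto
  have fU: "fibre X f y \<subseteq> U" using e0 by (auto simp: U_def L_def fibre_def)
  define V where "V = topspace Y - f ` (topspace X - U)"
  have "closedin Y (f ` (topspace X - U))"
    using cm Uop by (simp add: closed_map_def closedin_diff)
  then have Vop: "openin Y V" unfolding V_def by (simp add: openin_diff)
  have yV: "y \<in> V" using fU assms(4) by (auto simp: V_def fibre_def)
  show ?thesis
  proof (intro exI conjI ballI allI impI)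
    show "openin Y V" by (fact Vop)
    show "y \<in> V" by (fact yV)
    show "(0::real) < e/2" using e0 by simp
  next
    fix y' g'
    assume y'V: "y' \<in> V" and H: "continuous_map X euclidean g' \<and>
               (\<forall>x\<in>fibre X f y'. dist (g' x) (g x) < e/2)"
    have "g' ` (fibre X f y') \<inter> Z \<subseteq> \<Union>\<U>"
    proof
      fix p assume "p \<in> g' ` (fibre X f y') \<inter> Z"
      then obtain x where x: "x \<in> fibre X f y'" "p = g' x" "p \<in> Z" by auto
      have "x \<in> U" using x(1) y'V by (auto simp: V_def fibre_def)
      then obtain q where q: "q \<in> L" "dist q (g x) < e/2" by (auto simp: U_def)
      have "dist (g' x) (g x) < e/2" using H x(1) by auto
      then have "dist q p < e" using q(2) x(2) dist_triangle[of q p "g x"]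
        by (simp add: dist_commute)
      then show "p \<in> \<Union>\<U>" using key[OF q(1) x(3)] by (simp add: W_def)
    qed
    then show "g' \<in> R_set X f n {y'} Z k"
      using H Uo Um Uord by (auto simp: R_set_def)
  qed
qed

end
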